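(* (a) If $d\ge 3$ is odd, then $\operatorname{triv}(d,d-1)=\left\lfloor \frac{d-1}{6}\right\rfloor+1$ and $\operatorname{sign}(d,d-1)=\left\lfloor \frac{d-1}{6}\right\rfloor$. (b) If $d\ge 4$ is even, then $\operatorname{triv}(d,d-1)=\operatorname{sign}(d,d-1)=\left\lfloor \frac{d+2}{6}\right\rfloor$.
   Context: $\Bbbk$ is an algebraically closed field of characteristic $0$. For an integer $d\ge 1$, $A(d)=\Bbbk[x_1,x_2,x_3]/(x_1^d,x_2^d,x_3^d)=\bigoplus_j A(d)_j$ with its standard grading. $S_3$ acts on $A(d)$ by permuting variables. The linear map $E:A(d)_{j+1}\to A(d)_j$ is defined on the monomial basis by $E(x_1^{a_1}x_2^{a_2}x_3^{a_3})=\sum_{k=1}^{3} a_k(d-a_k)\,x_1^{a_1}\cdots x_k^{a_k-1}\cdots x_3^{a_3}$; it commutes with the $S_3$-action. $\operatorname{triv}(d,j)$ and $\operatorname{sign}(d,j)$ denote the multiplicities of the trivial and sign representations of $S_3$ in $\operatorname{Ker}(E)\cap A(d)_j$. *)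

theory Defs
  imports "HOL-Computational_Algebra.Polynomial" "HOL-Combinatorics.Permutations" "HOL-Library.Function_Algebras"
begin

text \<open>Exponent vectors of monomials in x_1,x_2,x_3 are functions a :: nat => nat
  supported on the index set {0,1,2} (index i stands for variable x_(i+1)).
  Elements of A(d)_j are coefficient functions on monomials supported on the
  monomial basis of A(d)_j.\<close>

definition mons :: "nat \<Rightarrow> nat \<Rightarrow> (nat \<Rightarrow> nat) set" where
  "mons d j = {a. (\<forall>i. i \<notin> {0,1,2} \<longrightarrow> a i = 0) \<and> (\<forall>i\<in>{0,1,2}. a i < d)
                  \<and> (\<Sum>i\<in>{0,1,2}. a i) = j}"

definition Acomp :: "'k itself \<Rightarrow> nat \<Rightarrow> nat \<Rightarrow> ((nat \<Rightarrow> nat) \<Rightarrow> 'k::field) set" where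
  "Acomp _ d j = {f. \<forall>a. a \<notin> mons d j \<longrightarrow> f a = 0}"

text \<open>The operator E, linear extension of
  E(x^a) = sum_k a_k (d - a_k) x^(a - e_k); coefficient of x^b in E(f).\<close>
definition Eop :: "nat \<Rightarrow> ((nat \<Rightarrow> nat) \<Rightarrow> 'k::field) \<Rightarrow> ((nat \<Rightarrow> nat) \<Rightarrow> 'k)" where
  "Eop d f = (\<lambda>b. \<Sum>k\<in>{0,1,2}.
      of_nat ((b k + 1) * (d - (b k + 1))) * f (b(k := b k + 1)))"

text \<open>Action of a permutation s of {0,1,2}: s . x_i = x_(s i), so
  s . x^a = x^(a o inv s), i.e. (s . f)(b) = f (b o s).\<close>
definition act :: "(nat \<Rightarrow> nat) \<Rightarrow> ((nat \<Rightarrow> nat) \<Rightarrow> 'k) \<Rightarrow> ((nat \<Rightarrow> nat) \<Rightarrow> 'k)" where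
  "act s f = (\<lambda>b. f (b \<circ> s))"

definition kerE :: "'k itself \<Rightarrow> nat \<Rightarrow> nat \<Rightarrow> ((nat \<Rightarrow> nat) \<Rightarrow> 'k::field) set" where
  "kerE t d j = {f \<in> Acomp t d j. Eop d f = (\<lambda>_. 0)}"

definition fscale :: "'k::field \<Rightarrow> ((nat \<Rightarrow> nat) \<Rightarrow> 'k) \<Rightarrow> ((nat \<Rightarrow> nat) \<Rightarrow> 'k)" where
  "fscale c f = (\<lambda>x. c * f x)"

text \<open>Multiplicity of the trivial representation = dimension of the S3-isotypic
  component of type trivial; similarly for sign (irreducible reps are 1-dimensional).\<close>
definition triv :: "'k::field itself \<Rightarrow> nat \<Rightarrow> nat \<Rightarrow> nat" where
  "triv t d j = vector_space.dim (fscale :: 'k \<Rightarrow> _)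
     {f \<in> kerE t d j. \<forall>s. s permutes {0,1,2} \<longrightarrow> act s f = f}"

definition sgn_mult :: "'k::field itself \<Rightarrow> nat \<Rightarrow> nat \<Rightarrow> nat" where
  "sgn_mult t d j = vector_space.dim (fscale :: 'k \<Rightarrow> _)
     {f \<in> kerE t d j. \<forall>s. s permutes {0,1,2} \<longrightarrow> act s f = fscale (of_int (sign s)) f}"

definition alg_closed :: "'k::field itself \<Rightarrow> bool" where
  "alg_closed _ \<longleftrightarrow> (\<forall>p :: 'k poly. degree p > 0 \<longrightarrow> (\<exists>x. poly p x = 0))"

end

theory Submission
  imports Defs
begin

lemma sum_fun_apply: "(\<Sum>s\<in>S. h s) x = (\<Sum>s\<in>S. h s x)"
  by (induction S rule: infinite_finite_induct) auto

lemma fscale_apply[simp]: "fscale c f x = c * f x" by (simp add: fscale_def)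

interpretation F: vector_space "fscale :: 'k::field \<Rightarrow> ((nat\<Rightarrow>nat)\<Rightarrow>'k) \<Rightarrow> _"
  by unfold_locales (auto simp: fscale_def fun_eq_iff algebra_simps)

lemma Eop_add: "Eop d (f + g) = Eop d f + Eop d g"
  by (simp add: Eop_def fun_eq_iff sum.distrib algebra_simps)
lemma Eop_scale: "Eop d (fscale c f) = fscale c (Eop d f)"
  by (simp add: Eop_def fun_eq_iff sum_distrib_left algebra_simps)

lemma Eop_linear: "Vector_Spaces.linear fscale fscale (Eop d :: ((nat\<Rightarrow>nat)\<Rightarrow>'k::field) \<Rightarrow> _)"
  unfolding Vector_Spaces.linear_iff using F.vector_space_axioms Eop_add Eop_scale by blast

lemma (in vector_space) rank_nullity_sub:
  assumes lin: "Vector_Spaces.linear scale scale f" and V: "subspace V"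
    and fin: "finite B0" "V \<subseteq> span B0"
  shows "dim V = dim {x\<in>V. f x = 0} + dim (f ` V)"
proof -
  interpret L: Vector_Spaces.linear scale scale f by (rule lin)
  let ?K = "{x\<in>V. f x = 0}"
  obtain BK where BK: "BK \<subseteq> ?K" "independent BK" "?K \<subseteq> span BK" "card BK = dim ?K"
    using basis_exists by blast
  have "BK \<subseteq> V" using BK(1) by auto
  then obtain B where B: "BK \<subseteq> B" "B \<subseteq> V" "independent B" "V \<subseteq> span B"
    using maximal_independent_subset_extend BK(2) by metis
  have finB: "finite B" using independent_span_bound[OF fin(1) B(3)] B(2) fin(2) by auto
  have cardB: "card B = dim V" using basis_card_eq_dim B by blast
  define C where "C = B - BK"
  have finC: "finite C" using finB C_def by auto
  have CV: "C \<subseteq> V" using B C_def by auto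
  have spC: "span C \<subseteq> V" using span_minimal[OF CV V] .
  have disj: "x = 0" if xC: "x \<in> span C" and xK: "x \<in> span BK" for x
  proof -
    have finBK: "finite BK" using finB B(1) finite_subset by blast
    obtain u where u: "x = (\<Sum>v\<in>C. scale (u v) v)" using xC span_finite[OF finC] by auto
    obtain w where w: "x = (\<Sum>v\<in>BK. scale (w v) v)" using xK span_finite[OF finBK] by auto
    define g where "g v = (if v \<in> C then u v else - w v)" for v
    have BCK: "B = C \<union> BK" "C \<inter> BK = {}" using B(1) C_def by auto
    have "(\<Sum>v\<in>B. scale (g v) v) = (\<Sum>v\<in>C. scale (g v) v) + (\<Sum>v\<in>BK. scale (g v) v)"
      using BCK finC finBK by (simp add: sum.union_disjoint)
    also have "(\<Sum>v\<in>C. scale (g v) v) = x" using u by (simp add: g_def)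
    also have "(\<Sum>v\<in>BK. scale (g v) v) = (\<Sum>v\<in>BK. - scale (w v) v)"
      using BCK(2) by (intro sum.cong) (auto simp: g_def scale_minus_left)
    also have "\<dots> = - x" using w by (simp add: sum_negf)
    finally have "(\<Sum>v\<in>B. scale (g v) v) = 0" by simp
    then have "\<forall>v\<in>C. g v = 0"
      using B(3) finB unfolding independent_explicit_finite_subsets C_def by blast
    then show "x = 0" using u by (simp add: g_def)
  qed
  have inj: "inj_on f (span C)"
    unfolding L.inj_on_iff_eq_0[OF subspace_span]
  proof (intro ballI impI)
    fix x assume "x \<in> span C" "f x = 0"
    then have "x \<in> ?K" using spC by auto
    then have "x \<in> span BK" using BK(3) by auto
    then show "x = 0" using disj \<open>x \<in> span C\<close> by blast
  qed
  have indC: "independent C" using B(3) C_def independent_mono by blast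
  have ind: "independent (f ` C)" by (rule L.independent_injective_image[OF indC inj])
  have injC: "inj_on f C" using inj span_superset inj_on_subset by blast
  have sub: "f ` C \<subseteq> f ` V" using CV by auto
  have sp: "f ` V \<subseteq> span (f ` C)"
  proof -
    have "f ` V \<subseteq> f ` span B" using B(4) by auto
    also have "\<dots> = span (f ` B)" using L.span_image by simp
    also have "\<dots> \<subseteq> span (insert 0 (f ` C))"
    proof (rule span_mono)
      show "f ` B \<subseteq> insert 0 (f ` C)" using BK(1) C_def by auto
    qed
    also have "\<dots> = span (f ` C)" by simp
    finally show ?thesis .
  qed
  have "dim (f ` V) = card (f ` C)" using dim_unique[OF sub sp ind refl] .
  also have "\<dots> = card C" using card_image[OF injC] .
  also have "\<dots> = card B - card BK" using C_def B(1) finB by (simp add: card_Diff_subset finite_subset)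
  finally have "dim (f ` V) = card B - card BK" .
  moreover have "card BK \<le> card B" using B(1) finB card_mono by blast
  ultimately show ?thesis using cardB BK(4) by simp
qed

abbreviation "I3 \<equiv> {0,1,2::nat}"

lemma sum_perm: "s permutes S \<Longrightarrow> sum g S = sum (g \<circ> s) S"
  by (metis permutes_image permutes_inj inj_on_subset subset_UNIV sum.reindex)

lemma sum_I3: "(\<Sum>i\<in>I3. g i) = g 0 + g 1 + g 2" by (simp add: add.assoc)

lemma mons_iff: "a \<in> mons d j \<longleftrightarrow> (\<forall>i. i \<notin> I3 \<longrightarrow> a i = 0) \<and> a 0 < d \<and> a 1 < d \<and> a 2 < d
   \<and> a 0 + a 1 + a 2 = j"
  unfolding mons_def by (auto simp: sum_I3)

lemma mons_perm: assumes "s permutes I3" shows "(a \<circ> s) \<in> mons d j \<longleftrightarrow> a \<in> mons d j"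
proof -
  have ni: "i \<notin> I3 \<Longrightarrow> s i = i" for i using permutes_not_in[OF assms] .
  have "(\<forall>i\<in>I3. a (s i) < d) \<longleftrightarrow> (\<forall>i\<in>I3. a i < d)"
    using permutes_image[OF assms] by (metis (no_types, lifting) image_iff)
  moreover have "(\<Sum>i\<in>I3. a (s i)) = (\<Sum>i\<in>I3. a i)"
    using sum_perm[OF assms, of a] by (simp add: o_def)
  ultimately show ?thesis unfolding mons_def using ni by (auto simp: o_def)
qed

definition tr :: "nat \<Rightarrow> nat \<Rightarrow> nat \<Rightarrow> (nat \<Rightarrow> nat)" where
  "tr x y z = (\<lambda>i. if i = 0 then x else if i = 1 then y else if i = 2 then z else 0)"

lemma tr_apply[simp]: "tr x y z 0 = x" "tr x y z 1 = y" "tr x y z 2 = z"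
  by (auto simp: tr_def)

lemma tr_mons: "tr x y z \<in> mons d j \<longleftrightarrow> x < d \<and> y < d \<and> z < d \<and> x + y + z = j"
  unfolding mons_iff by (auto simp: tr_def)

lemma mons_tr: "a \<in> mons d j \<Longrightarrow> a = tr (a 0) (a 1) (a 2)"
  unfolding mons_iff by (auto simp: tr_def fun_eq_iff)

lemma tr_t01: "tr x y z \<circ> Transposition.transpose 0 1 = tr y x z"
  by (auto simp: tr_def fun_eq_iff transpose_def)
lemma tr_t12: "tr x y z \<circ> Transposition.transpose 1 2 = tr x z y"
  by (auto simp: tr_def fun_eq_iff transpose_def)
lemma tr_t02: "tr x y z \<circ> Transposition.transpose 0 2 = tr z y x"
  by (auto simp: tr_def fun_eq_iff transpose_def)

lemma comp_t01[simp]: fixes a :: "nat \<Rightarrow> 'b" shows "(a \<circ> Transposition.transpose 0 1) 0 = a 1" "(a \<circ> Transposition.transpose 0 1) 1 = a 0" "(a \<circ> Transposition.transpose 0 1) 2 = a 2"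
  by (auto simp: transpose_def)
lemma comp_t12[simp]: fixes a :: "nat \<Rightarrow> 'b" shows "(a \<circ> Transposition.transpose 1 2) 0 = a 0" "(a \<circ> Transposition.transpose 1 2) 1 = a 2" "(a \<circ> Transposition.transpose 1 2) 2 = a 1"
  by (auto simp: transpose_def)
lemma comp_t02[simp]: fixes a :: "nat \<Rightarrow> 'b" shows "(a \<circ> Transposition.transpose 0 2) 0 = a 2" "(a \<circ> Transposition.transpose 0 2) 1 = a 1" "(a \<circ> Transposition.transpose 0 2) 2 = a 0"
  by (auto simp: transpose_def)

lemma transp_cases:
  assumes "a \<in> I3" "b \<in> I3" "a \<noteq> b"
    "P (Transposition.transpose 0 1)" "P (Transposition.transpose 1 2)" "P (Transposition.transpose 0 2)"
  shows "P (Transposition.transpose a b)"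
proof -
  have "Transposition.transpose (1::nat) 0 = Transposition.transpose 0 1"
     "Transposition.transpose (2::nat) 1 = Transposition.transpose 1 2"
     "Transposition.transpose (2::nat) 0 = Transposition.transpose 0 2"
    by (rule transpose_commute)+
  then show ?thesis using assms by auto
qed

lemma act_comp: "act (t \<circ> p) f = act t (act p f)"
  by (simp add: act_def fun_eq_iff o_assoc)
lemma act_add: "act s (f + g) = act s f + act s g" by (simp add: act_def fun_eq_iff)
lemma act_scale: "act s (fscale c f) = fscale c (act s f)" by (simp add: act_def fun_eq_iff)
lemma act_zero: "act s 0 = 0" by (simp add: act_def fun_eq_iff)
lemma act_neg: "act s (- f) = - act s f" by (simp add: act_def fun_eq_iff)

lemma finite_I3_: "finite I3" by simp

lemma perm_inv:
  assumes T: "\<And>a b. a \<in> I3 \<Longrightarrow> b \<in> I3 \<Longrightarrow> a \<noteq> b \<Longrightarrow> act (Transposition.transpose a b) f = f"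
    and s: "s permutes I3"
  shows "act s f = f"
  using s finite_I3_
proof (induction rule: permutes_induct)
  case id then show ?case by (simp add: act_def o_def)
next
  case (swap a b p)
  show ?case unfolding act_comp using swap T[of a b] by simp
qed

lemma perm_alt:
  fixes f :: "(nat \<Rightarrow> nat) \<Rightarrow> 'k::field"
  assumes T: "\<And>a b. a \<in> I3 \<Longrightarrow> b \<in> I3 \<Longrightarrow> a \<noteq> b \<Longrightarrow> act (Transposition.transpose a b) f = - f"
    and s: "s permutes I3"
  shows "act s f = fscale (of_int (sign s)) f"
  using s finite_I3_
proof (induction rule: permutes_induct)
  case id then show ?case by (simp add: act_def fscale_def o_def)
next
  case (swap a b p)
  have pp: "permutation p" using permutes_imp_permutation[OF finite_I3_ \<open>p permutes I3\<close>] .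
  have pt: "permutation (Transposition.transpose a b)" by (rule permutation_swap_id)
  have sg: "sign (Transposition.transpose a b \<circ> p) = - sign p"
    using swap(3) by (simp add: sign_compose[OF pt pp] sign_swap_id)
  have "act (Transposition.transpose a b \<circ> p) f = act (Transposition.transpose a b) (act p f)"
    by (rule act_comp)
  also have "\<dots> = act (Transposition.transpose a b) (fscale (of_int (sign p)) f)"
    using \<open>act p f = fscale (of_int (sign p)) f\<close> by simp
  also have "\<dots> = fscale (of_int (sign p)) (act (Transposition.transpose a b) f)"
    by (rule act_scale)
  also have "\<dots> = fscale (of_int (sign p)) (- f)" using T[OF swap(1,2,3)] by simp
  also have "\<dots> = fscale (of_int (sign (Transposition.transpose a b \<circ> p))) f"
    unfolding sg by (simp add: fscale_def fun_eq_iff)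
  finally show ?case .
qed

abbreviation "cf d t \<equiv> (of_nat ((t + 1) * (d - (t + 1))) :: 'k::field)"

lemma Eop_act:
  assumes s: "s permutes I3"
  shows "Eop d (act s f) = act s (Eop d f)"
proof (rule ext)
  fix b :: "nat \<Rightarrow> nat"
  have inj: "inj s" using permutes_inj[OF s] .
  have upd: "(b(s k := v)) \<circ> s = (b \<circ> s)(k := v)" for k v
    using inj by (auto simp: fun_eq_iff inj_eq)
  have "Eop d (act s f) b = (\<Sum>k\<in>I3. cf d (b k) * f ((b(k := b k + 1)) \<circ> s))"
    by (simp add: Eop_def act_def)
  also have "\<dots> = (\<Sum>k\<in>I3. cf d (b (s k)) * f ((b(s k := b (s k) + 1)) \<circ> s))"
    using sum_perm[OF s, of "\<lambda>k. cf d (b k) * f ((b(k := b k + 1)) \<circ> s)"] by (simp add: o_def)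
  also have "\<dots> = act s (Eop d f) b"
    by (simp add: Eop_def act_def upd)
  finally show "Eop d (act s f) b = act s (Eop d f) b" .
qed

lemma mons_upd:
  assumes "k \<in> I3" "b(k := b k + 1) \<in> mons d n"
  shows "b \<in> mons d (n - 1)"
  using assms unfolding mons_iff
  by (auto split: if_splits; metis fun_upd_other)

lemma Eop_Acomp:
  assumes "f \<in> Acomp TYPE('k::field) d n"
  shows "Eop d f \<in> Acomp TYPE('k) d (n - 1)"
  unfolding Acomp_def
proof (intro CollectI allI impI)
  fix b assume nb: "b \<notin> mons d (n - 1)"
  have "f (b(k := b k + 1)) = 0" if "k \<in> I3" for k
    using assms mons_upd[OF that, of b d n] nb unfolding Acomp_def by blast
  then show "Eop d f b = 0" unfolding Eop_def by simp
qed

fun pre :: "nat \<Rightarrow> (nat \<Rightarrow> nat \<Rightarrow> nat \<Rightarrow> 'k::field) \<Rightarrow> nat \<Rightarrow> nat \<Rightarrow> nat \<Rightarrow> 'k" where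
  "pre d G 0 y z = 0"
| "pre d G (Suc x) y z = (G x y z - cf d y * pre d G x (Suc y) z - cf d z * pre d G x y (Suc z)) / cf d x"

lemma surj_full:
  fixes g :: "(nat \<Rightarrow> nat) \<Rightarrow> 'k::field_char_0"
  assumes n: "1 \<le> n" "n < d" and g: "g \<in> Acomp TYPE('k) d (n - 1)"
  shows "\<exists>f \<in> Acomp TYPE('k) d n. Eop d f = g"
proof
  define G where "G x y z = g (tr x y z)" for x y z
  define f where "f a = (if a \<in> mons d n then pre d G (a 0) (a 1) (a 2) else 0)" for a
  show "f \<in> Acomp TYPE('k) d n" by (simp add: Acomp_def f_def)
  show "Eop d f = g"
  proof (rule ext)
    fix b
    show "Eop d f b = g b"
    proof (cases "b \<in> mons d (n - 1)")
      case False
      have "Eop d f \<in> Acomp TYPE('k) d (n - 1)"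
        by (rule Eop_Acomp) (simp add: Acomp_def f_def)
      then show ?thesis using False g unfolding Acomp_def by auto
    next
      case True
      then have b: "b 0 < d" "b 1 < d" "b 2 < d" "b 0 + b 1 + b 2 = n - 1"
        "\<forall>i. i \<notin> I3 \<longrightarrow> b i = 0" unfolding mons_iff by auto
      have m0: "b(0 := b 0 + 1) \<in> mons d n" and m1: "b(1 := b 1 + 1) \<in> mons d n"
        and m2: "b(2 := b 2 + 1) \<in> mons d n"
        using b n unfolding mons_iff by auto
      have "(b 0 + 1) * (d - (b 0 + 1)) \<noteq> 0" using b n by simp
      then have c0: "cf d (b 0) \<noteq> (0::'k)" by (metis of_nat_eq_0_iff)
      have gb: "g b = G (b 0) (b 1) (b 2)" unfolding G_def using mons_tr[OF True] by simp
      have "Eop d f b = cf d (b 0) * f (b(0 := b 0 + 1)) + cf d (b 1) * f (b(1 := b 1 + 1))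
          + cf d (b 2) * f (b(2 := b 2 + 1))"
        unfolding Eop_def by (simp add: sum_I3)
      also have "\<dots> = cf d (b 0) * pre d G (Suc (b 0)) (b 1) (b 2)
          + cf d (b 1) * pre d G (b 0) (Suc (b 1)) (b 2) + cf d (b 2) * pre d G (b 0) (b 1) (Suc (b 2))"
        using m0 m1 m2 by (simp add: f_def)
      also have "\<dots> = G (b 0) (b 1) (b 2)"
        using c0 by (simp add: field_simps)
      finally show ?thesis using gb by simp
    qed
  qed
qed

definition Vt :: "'k::field itself \<Rightarrow> nat \<Rightarrow> nat \<Rightarrow> ((nat \<Rightarrow> nat) \<Rightarrow> 'k) set" where
  "Vt t d j = {f \<in> Acomp t d j. \<forall>s. s permutes I3 \<longrightarrow> act s f = f}"
definition Va :: "'k::field itself \<Rightarrow> nat \<Rightarrow> nat \<Rightarrow> ((nat \<Rightarrow> nat) \<Rightarrow> 'k) set" where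
  "Va t d j = {f \<in> Acomp t d j. \<forall>s. s permutes I3 \<longrightarrow> act s f = fscale (of_int (sign s)) f}"

abbreviation "P3 \<equiv> {s. s permutes I3}"

lemma card_P3: "card P3 = 6"
proof -
  have "card P3 = fact 3" by (rule card_permutations) auto
  then show ?thesis by (simp add: fact_numeral)
qed

lemma finite_P3: "finite P3" by (rule finite_permutations) simp

definition Rs :: "((nat \<Rightarrow> nat) \<Rightarrow> 'k::field) \<Rightarrow> ((nat \<Rightarrow> nat) \<Rightarrow> 'k)" where
  "Rs f = (\<lambda>b. (1/6) * (\<Sum>s\<in>P3. f (b \<circ> s)))"
definition Ra :: "((nat \<Rightarrow> nat) \<Rightarrow> 'k::field) \<Rightarrow> ((nat \<Rightarrow> nat) \<Rightarrow> 'k)" where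
  "Ra f = (\<lambda>b. (1/6) * (\<Sum>s\<in>P3. of_int (sign s) * f (b \<circ> s)))"

lemma R_Acomp:
  assumes "f \<in> Acomp t d n"
  shows "Rs f \<in> Acomp t d n" "Ra f \<in> Acomp t d n"
proof -
  have z: "f (b \<circ> s) = 0" if "b \<notin> mons d n" "s permutes I3" for b s
    using assms that mons_perm[OF that(2)] unfolding Acomp_def by blast
  show "Rs f \<in> Acomp t d n" "Ra f \<in> Acomp t d n"
    unfolding Acomp_def Rs_def Ra_def using z by auto
qed

lemma Rs_inv: assumes "\<sigma> permutes I3" shows "act \<sigma> (Rs f) = Rs f"
proof (rule ext)
  fix b
  have "(\<Sum>s\<in>P3. f (b \<circ> s)) = (\<Sum>s\<in>P3. f (b \<circ> (\<sigma> \<circ> s)))"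
    by (rule setum_permutations_compose_left[OF assms])
  then show "act \<sigma> (Rs f) b = Rs f b" by (simp add: act_def Rs_def o_assoc)
qed

lemma Ra_alt: assumes "\<sigma> permutes I3"
  shows "act \<sigma> (Ra (f :: (nat \<Rightarrow> nat) \<Rightarrow> 'k::field)) = fscale (of_int (sign \<sigma>)) (Ra f)"
proof (rule ext)
  fix b
  have ps: "permutation \<sigma>" using permutes_imp_permutation[OF finite_I3_ assms] .
  have "(\<Sum>s\<in>P3. of_int (sign s) * f (b \<circ> s)) =
        (\<Sum>s\<in>P3. of_int (sign (\<sigma> \<circ> s)) * f (b \<circ> (\<sigma> \<circ> s)))"
    by (rule setum_permutations_compose_left[OF assms])
  also have "\<dots> = (\<Sum>s\<in>P3. of_int (sign \<sigma>) * (of_int (sign s) * f (b \<circ> \<sigma> \<circ> s)))"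
    by (intro sum.cong refl)
       (simp add: sign_compose[OF ps permutes_imp_permutation[OF finite_I3_]] o_assoc)
  also have "\<dots> = of_int (sign \<sigma>) * (\<Sum>s\<in>P3. of_int (sign s) * f (b \<circ> \<sigma> \<circ> s))"
    by (simp add: sum_distrib_left)
  finally have eq: "(\<Sum>s\<in>P3. of_int (sign s) * f (b \<circ> s)) =
     of_int (sign \<sigma>) * (\<Sum>s\<in>P3. of_int (sign s) * f (b \<circ> \<sigma> \<circ> s))" .
  have sq: "(of_int (sign \<sigma>) :: 'k) * of_int (sign \<sigma>) = 1"
    by (metis of_int_1 of_int_mult sign_idempotent)
  have "act \<sigma> (Ra f) b = (1/6) * (\<Sum>s\<in>P3. of_int (sign s) * f (b \<circ> \<sigma> \<circ> s))"
    by (simp add: act_def Ra_def)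
  also have "\<dots> = of_int (sign \<sigma>) * Ra f b"
    unfolding Ra_def eq using sq by (simp add: algebra_simps) 
  finally show "act \<sigma> (Ra f) b = fscale (of_int (sign \<sigma>)) (Ra f) b" by simp
qed

lemma swap_help:
  fixes c :: "'k::field"
  shows "c * (\<Sum>s\<in>S. w s * (\<Sum>k\<in>K. a k * h k s)) = (\<Sum>k\<in>K. a k * (c * (\<Sum>s\<in>S. w s * h k s)))"
proof -
  have "c * (\<Sum>s\<in>S. w s * (\<Sum>k\<in>K. a k * h k s)) = (\<Sum>s\<in>S. \<Sum>k\<in>K. a k * (c * (w s * h k s)))"
    by (simp add: sum_distrib_left mult_ac)
  also have "\<dots> = (\<Sum>k\<in>K. \<Sum>s\<in>S. a k * (c * (w s * h k s)))" by (rule sum.swap)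
  also have "\<dots> = (\<Sum>k\<in>K. a k * (c * (\<Sum>s\<in>S. w s * h k s)))"
    by (simp add: sum_distrib_left)
  finally show ?thesis .
qed

lemma Eop_sum_comm:
  fixes w :: "(nat \<Rightarrow> nat) \<Rightarrow> 'k::field"
  shows "Eop d (\<lambda>b. c * (\<Sum>s\<in>P3. w s * f (b \<circ> s))) = (\<lambda>b. c * (\<Sum>s\<in>P3. w s * Eop d f (b \<circ> s)))"
proof (rule ext)
  fix b
  have "Eop d f (b \<circ> s) = (\<Sum>k\<in>I3. cf d (b k) * f ((b(k := b k + 1)) \<circ> s))" if "s \<in> P3" for s
  proof -
    have "Eop d f (b \<circ> s) = act s (Eop d f) b" by (simp add: act_def)
    also have "\<dots> = Eop d (act s f) b" using Eop_act[of s d f] that by simp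
    finally show ?thesis by (simp add: Eop_def act_def)
  qed
  then have "(\<lambda>b. c * (\<Sum>s\<in>P3. w s * Eop d f (b \<circ> s))) b =
     c * (\<Sum>s\<in>P3. w s * (\<Sum>k\<in>I3. cf d (b k) * f ((b(k := b k + 1)) \<circ> s)))" by simp
  also have "\<dots> = (\<Sum>k\<in>I3. cf d (b k) * (c * (\<Sum>s\<in>P3. w s * f ((b(k := b k + 1)) \<circ> s))))"
    by (rule swap_help)
  finally show "Eop d (\<lambda>b. c * (\<Sum>s\<in>P3. w s * f (b \<circ> s))) b = (\<lambda>b. c * (\<Sum>s\<in>P3. w s * Eop d f (b \<circ> s))) b"
    by (simp add: Eop_def)
qed

lemma Eop_Rs: "Eop d (Rs f) = Rs (Eop d f)"
  using Eop_sum_comm[of d "1/6" "\<lambda>_. 1" f] by (simp add: Rs_def)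

lemma Eop_Ra: "Eop d (Ra f) = Ra (Eop d f)"
  using Eop_sum_comm[of d "1/6" "\<lambda>s. of_int (sign s)" f] by (simp add: Ra_def)

lemma Rs_fix:
  fixes g :: "(nat \<Rightarrow> nat) \<Rightarrow> 'k::field_char_0"
  assumes "g \<in> Vt TYPE('k) d j" shows "Rs g = g"
proof (rule ext)
  fix b
  have "g (b \<circ> s) = g b" if "s \<in> P3" for s
    using assms that unfolding Vt_def act_def by (auto simp: fun_eq_iff)
  then have "(\<Sum>s\<in>P3. g (b \<circ> s)) = of_nat 6 * g b" using card_P3 by simp
  then show "Rs g b = g b" by (simp add: Rs_def)
qed

lemma Ra_fix:
  fixes g :: "(nat \<Rightarrow> nat) \<Rightarrow> 'k::field_char_0"
  assumes "g \<in> Va TYPE('k) d j" shows "Ra g = g"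
proof (rule ext)
  fix b
  have "of_int (sign s) * g (b \<circ> s) = g b" if "s \<in> P3" for s
  proof -
    have "g (b \<circ> s) = of_int (sign s) * g b"
      using assms that unfolding Vt_def Va_def act_def by (auto simp: fun_eq_iff fscale_def)
    moreover have "(of_int (sign s) :: 'k) * of_int (sign s) = 1"
      by (metis of_int_1 of_int_mult sign_idempotent)
    ultimately show ?thesis by (metis mult.assoc mult_1)
  qed
  then have "(\<Sum>s\<in>P3. of_int (sign s) * g (b \<circ> s)) = of_nat 6 * g b" using card_P3 by simp
  then show "Ra g b = g b" by (simp add: Ra_def)
qed

lemma Eop_image_Vt:
  assumes n: "1 \<le> n" "n < d"
  shows "Eop d ` Vt TYPE('k::field_char_0) d n = Vt TYPE('k) d (n - 1)"
proof
  show "Eop d ` Vt TYPE('k) d n \<subseteq> Vt TYPE('k) d (n - 1)"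
  proof
    fix g assume "g \<in> Eop d ` Vt TYPE('k) d n"
    then obtain f where f: "f \<in> Vt TYPE('k) d n" "g = Eop d f" by auto
    have "g \<in> Acomp TYPE('k) d (n - 1)" using f Eop_Acomp unfolding Vt_def by blast
    moreover have "act s g = g" if "s permutes I3" for s
      using f that Eop_act[OF that, of d f] unfolding Vt_def by auto
    ultimately show "g \<in> Vt TYPE('k) d (n - 1)" unfolding Vt_def by blast
  qed
  show "Vt TYPE('k) d (n - 1) \<subseteq> Eop d ` Vt TYPE('k) d n"
  proof
    fix g assume g: "g \<in> Vt TYPE('k) d (n - 1)"
    then obtain f where f: "f \<in> Acomp TYPE('k) d n" "Eop d f = g"
      using surj_full[OF n] unfolding Vt_def by blast
    have "Rs f \<in> Vt TYPE('k) d n" using R_Acomp(1)[OF f(1)] Rs_inv unfolding Vt_def by blast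
    moreover have "Eop d (Rs f) = g" using Eop_Rs f(2) Rs_fix[OF g] by metis
    ultimately show "g \<in> Eop d ` Vt TYPE('k) d n" by (metis image_eqI)
  qed
qed

lemma Eop_image_Va:
  assumes n: "1 \<le> n" "n < d"
  shows "Eop d ` Va TYPE('k::field_char_0) d n = Va TYPE('k) d (n - 1)"
proof
  show "Eop d ` Va TYPE('k) d n \<subseteq> Va TYPE('k) d (n - 1)"
  proof
    fix g assume "g \<in> Eop d ` Va TYPE('k) d n"
    then obtain f where f: "f \<in> Va TYPE('k) d n" "g = Eop d f" by auto
    have "g \<in> Acomp TYPE('k) d (n - 1)" using f Eop_Acomp unfolding Va_def by blast
    moreover have "act s g = fscale (of_int (sign s)) g" if "s permutes I3" for s
      using f that Eop_act[OF that, of d f] Eop_scale[of d "of_int (sign s)" f] unfolding Va_def by simp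
    ultimately show "g \<in> Va TYPE('k) d (n - 1)" unfolding Va_def by blast
  qed
  show "Va TYPE('k) d (n - 1) \<subseteq> Eop d ` Va TYPE('k) d n"
  proof
    fix g assume g: "g \<in> Va TYPE('k) d (n - 1)"
    then obtain f where f: "f \<in> Acomp TYPE('k) d n" "Eop d f = g"
      using surj_full[OF n] unfolding Va_def by blast
    have "Ra f \<in> Va TYPE('k) d n" using R_Acomp(2)[OF f(1)] Ra_alt unfolding Va_def by blast
    moreover have "Eop d (Ra f) = g" using Eop_Ra f(2) Ra_fix[OF g] by metis
    ultimately show "g \<in> Eop d ` Va TYPE('k) d n" by (metis image_eqI)
  qed
qed

definition srt :: "nat \<Rightarrow> nat \<Rightarrow> nat \<Rightarrow> nat \<times> nat \<times> nat" where
  "srt x y z = (max x (max y z), x + y + z - max x (max y z) - min x (min y z), min x (min y z))"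

definition sg :: "nat \<Rightarrow> nat \<Rightarrow> nat \<Rightarrow> int" where
  "sg x y z = sgn ((int x - int y) * (int x - int z) * (int y - int z))"

definition trp :: "nat \<times> nat \<times> nat \<Rightarrow> nat \<Rightarrow> nat" where
  "trp c = tr (fst c) (fst (snd c)) (snd (snd c))"

definition ST :: "nat \<Rightarrow> (nat \<times> nat \<times> nat) set" where
  "ST j = {(x,y,z). z \<le> y \<and> y \<le> x \<and> x + y + z = j}"
definition SA :: "nat \<Rightarrow> (nat \<times> nat \<times> nat) set" where
  "SA j = {(x,y,z). z < y \<and> y < x \<and> x + y + z = j}"

lemma srt_sw: "srt y x z = srt x y z" "srt x z y = srt x y z" "srt z y x = srt x y z"
  by (auto simp: srt_def max_def min_def)

lemma sgn_neg_int: "sgn (- a) = - sgn (a::int)" by (simp add: sgn_if)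

lemma sg_sw: "sg y x z = - sg x y z" "sg x z y = - sg x y z" "sg z y x = - sg x y z"
proof -
  have e1: "(int y - int x) * (int y - int z) * (int x - int z) = - ((int x - int y) * (int x - int z) * (int y - int z))"
    "(int x - int z) * (int x - int y) * (int z - int y) = - ((int x - int y) * (int x - int z) * (int y - int z))"
    "(int z - int y) * (int z - int x) * (int y - int x) = - ((int x - int y) * (int x - int z) * (int y - int z))"
    by algebra+
  show "sg y x z = - sg x y z" "sg x z y = - sg x y z" "sg z y x = - sg x y z"
    unfolding sg_def by (simp_all only: e1 sgn_neg_int)
qed

lemma srt_id: "z \<le> y \<Longrightarrow> y \<le> x \<Longrightarrow> srt x y z = (x, y, z)"
  by (auto simp: srt_def max_def min_def)

lemma sg_one: "z < y \<Longrightarrow> y < x \<Longrightarrow> sg x y z = 1"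
  by (simp add: sg_def sgn_mult)

lemma srt_ST: "srt x y z \<in> ST (x + y + z)"
  by (auto simp: srt_def ST_def max_def min_def)

lemma sg_SA: "sg x y z \<noteq> 0 \<Longrightarrow> srt x y z \<in> SA (x + y + z)"
  by (auto simp: srt_def SA_def max_def min_def sg_def sgn_mult sgn_eq_0_iff)

lemma finite_ST: "finite (ST j)"
  by (rule finite_subset[of _ "{..j} \<times> {..j} \<times> {..j}"]) (auto simp: ST_def)
lemma finite_SA: "finite (SA j)"
  by (rule finite_subset[of _ "{..j} \<times> {..j} \<times> {..j}"]) (auto simp: SA_def)

lemma inv_triple:
  assumes h1: "\<And>x y z. f (tr x y z) = f (tr y x z)" and h2: "\<And>x y z. f (tr x y z) = f (tr x z y)"
  shows "f (tr x y z) = f (trp (srt x y z))"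
proof -
  consider "z \<le> y \<and> y \<le> x" | "y \<le> z \<and> z \<le> x" | "z \<le> x \<and> x \<le> y" | "x \<le> z \<and> z \<le> y"
    | "y \<le> x \<and> x \<le> z" | "x \<le> y \<and> y \<le> z" by linarith
  then show ?thesis
  proof cases
    case 1 then show ?thesis by (simp add: srt_id trp_def)
  next
    case 2
    have S: "srt x y z = (x, z, y)" using srt_id[of y z x] srt_sw(2)[of x y z] 2 by simp
    show ?thesis unfolding S trp_def fst_conv snd_conv by (rule h2)
  next
    case 3
    have S: "srt x y z = (y, x, z)" using srt_id[of z x y] srt_sw(1)[of x y z] 3 by simp
    show ?thesis unfolding S trp_def fst_conv snd_conv by (rule h1)
  next
    case 4
    have S: "srt x y z = (y, z, x)" using srt_id[of x z y] srt_sw(1)[of x y z] srt_sw(2)[of y x z] 4 by simp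
    have "f (tr x y z) = f (tr y x z)" by (rule h1)
    also have "\<dots> = f (tr y z x)" by (rule h2)
    finally show ?thesis unfolding S trp_def fst_conv snd_conv .
  next
    case 5
    have S: "srt x y z = (z, x, y)" using srt_id[of y x z] srt_sw(2)[of x y z] srt_sw(1)[of x z y] 5 by simp
    have "f (tr x y z) = f (tr x z y)" by (rule h2)
    also have "\<dots> = f (tr z x y)" by (rule h1)
    finally show ?thesis unfolding S trp_def fst_conv snd_conv .
  next
    case 6
    have S: "srt x y z = (z, y, x)" using srt_id[of x y z] srt_sw(3)[of x y z] 6 by simp
    have "f (tr x y z) = f (tr y x z)" by (rule h1)
    also have "\<dots> = f (tr y z x)" by (rule h2)
    also have "\<dots> = f (tr z y x)" by (rule h1)
    finally show ?thesis unfolding S trp_def fst_conv snd_conv .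
  qed
qed

lemma self_neg_zero: "(a::'k::field_char_0) = - a \<Longrightarrow> a = 0"
proof -
  assume a: "a = - a"
  have "a + a = a + - a" using arg_cong[OF a, of "\<lambda>t. a + t"] .
  then have "a + a = 0" by (simp only: add.right_inverse)
  then have "2 * a = 0" by (simp only: mult_2)
  then show "a = 0" by simp
qed

lemma alt_triple:
  fixes f :: "(nat \<Rightarrow> nat) \<Rightarrow> 'k::field_char_0"
  assumes h1: "\<And>x y z. f (tr y x z) = - f (tr x y z)" and h2: "\<And>x y z. f (tr x z y) = - f (tr x y z)"
  shows "f (tr x y z) = of_int (sg x y z) * f (trp (srt x y z))"
proof (cases "x = y \<or> y = z \<or> x = z")
  case True
  have "sg x y z = 0" using True by (auto simp: sg_def)
  moreover have "f (tr x y z) = 0"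
  proof -
    { assume "x = y" then have ?thesis using self_neg_zero[OF h1[of x x z]] by simp }
    moreover
    { assume "y = z" then have ?thesis using self_neg_zero[OF h2[of x y y]] by simp }
    moreover
    { assume xz: "x = z"
      have "f (tr y x x) = 0" using self_neg_zero[OF h2[of y x x]] .
      then have ?thesis using h1[of y x x] xz by simp }
    ultimately show ?thesis using True by blast
  qed
  ultimately show ?thesis by simp
next
  case False
  then consider "z < y \<and> y < x" | "y < z \<and> z < x" | "z < x \<and> x < y" | "x < z \<and> z < y"
    | "y < x \<and> x < z" | "x < y \<and> y < z" by linarith
  then show ?thesis
  proof cases
    case 1 then show ?thesis by (simp add: srt_id trp_def sg_one)
  next
    case 2
    have S: "srt x y z = (x, z, y)" using srt_id[of y z x] srt_sw(2)[of x y z] 2 by simp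
    have G: "sg x y z = -1" using sg_sw(2)[of x z y] sg_one[of y z x] 2 by simp
    show ?thesis unfolding S G trp_def fst_conv snd_conv using h2[of x z y] by simp
  next
    case 3
    have S: "srt x y z = (y, x, z)" using srt_id[of z x y] srt_sw(1)[of x y z] 3 by simp
    have G: "sg x y z = -1" using sg_sw(1)[of y x z] sg_one[of z x y] 3 by simp
    show ?thesis unfolding S G trp_def fst_conv snd_conv using h1[of y x z] by simp
  next
    case 4
    have S: "srt x y z = (y, z, x)" using srt_id[of x z y] srt_sw(1)[of x y z] srt_sw(2)[of y x z] 4 by simp
    have G: "sg x y z = 1" using sg_sw(1)[of y x z] sg_sw(2)[of y z x] sg_one[of x z y] 4 by simp
    have "f (tr x y z) = - f (tr y x z)" by (rule h1)
    also have "\<dots> = f (tr y z x)" using h2[of y z x] by simp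
    finally show ?thesis unfolding S G trp_def fst_conv snd_conv by simp
  next
    case 5
    have S: "srt x y z = (z, x, y)" using srt_id[of y x z] srt_sw(2)[of x y z] srt_sw(1)[of x z y] 5 by simp
    have G: "sg x y z = 1" using sg_sw(2)[of x z y] sg_sw(1)[of z x y] sg_one[of y x z] 5 by simp
    have "f (tr x y z) = - f (tr x z y)" using h2[of x z y] by simp
    also have "\<dots> = f (tr z x y)" using h1[of z x y] by simp
    finally show ?thesis unfolding S G trp_def fst_conv snd_conv by simp
  next
    case 6
    have S: "srt x y z = (z, y, x)" using srt_id[of x y z] srt_sw(3)[of x y z] 6 by simp
    have G: "sg x y z = -1" using sg_sw(3)[of z y x] sg_one[of x y z] 6 by simp
    have "f (tr x y z) = - f (tr y x z)" by (rule h1)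
    also have "\<dots> = f (tr y z x)" using h2[of y z x] by simp
    also have "\<dots> = - f (tr z y x)" using h1[of z y x] by simp
    finally show ?thesis unfolding S G trp_def fst_conv snd_conv by simp
  qed
qed

definition Ob :: "nat \<Rightarrow> nat \<Rightarrow> nat \<times> nat \<times> nat \<Rightarrow> (nat \<Rightarrow> nat) \<Rightarrow> 'k::field" where
  "Ob d j c = (\<lambda>a. if a \<in> mons d j \<and> srt (a 0) (a 1) (a 2) = c then 1 else 0)"
definition Ab :: "nat \<Rightarrow> nat \<Rightarrow> nat \<times> nat \<times> nat \<Rightarrow> (nat \<Rightarrow> nat) \<Rightarrow> 'k::field" where
  "Ab d j c = (\<lambda>a. if a \<in> mons d j \<and> srt (a 0) (a 1) (a 2) = c then of_int (sg (a 0) (a 1) (a 2)) else 0)"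

lemma t_perm: "Transposition.transpose (0::nat) 1 permutes I3" "Transposition.transpose (1::nat) 2 permutes I3"
  "Transposition.transpose (0::nat) 2 permutes I3"
  by (auto intro: permutes_swap_id)

lemmas mperm01 = mons_perm[OF t_perm(1), simplified]
lemmas mperm12 = mons_perm[OF t_perm(2), simplified]
lemmas mperm02 = mons_perm[OF t_perm(3), simplified]
lemmas ct01 = comp_t01[simplified]
lemmas ct12 = comp_t12[simplified]
lemmas ct02 = comp_t02[simplified]

lemma Ob_Vt: "Ob d j c \<in> Vt TYPE('k::field) d j"
proof -
  have "act s (Ob d j c :: _ \<Rightarrow> 'k) = Ob d j c" if s: "s permutes I3" for s
  proof (rule perm_inv[OF _ s])
    fix a b :: nat assume ab: "a \<in> I3" "b \<in> I3" "a \<noteq> b"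
    show "act (Transposition.transpose a b) (Ob d j c :: _ \<Rightarrow> 'k) = Ob d j c"
    proof (rule transp_cases[OF ab])
      show "act (Transposition.transpose 0 1) (Ob d j c :: _ \<Rightarrow> 'k) = Ob d j c"
        by (auto simp: act_def Ob_def fun_eq_iff mperm01 ct01 srt_sw)
      show "act (Transposition.transpose 1 2) (Ob d j c :: _ \<Rightarrow> 'k) = Ob d j c"
        by (auto simp: act_def Ob_def fun_eq_iff mperm12 ct12 srt_sw)
      show "act (Transposition.transpose 0 2) (Ob d j c :: _ \<Rightarrow> 'k) = Ob d j c"
        by (auto simp: act_def Ob_def fun_eq_iff mperm02 ct02 srt_sw)
    qed
  qed
  then show ?thesis unfolding Vt_def Acomp_def by (auto simp: Ob_def)
qed

lemma Ab_Va: "Ab d j c \<in> Va TYPE('k::field) d j"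
proof -
  have "act s (Ab d j c :: _ \<Rightarrow> 'k) = fscale (of_int (sign s)) (Ab d j c)" if s: "s permutes I3" for s
  proof (rule perm_alt[OF _ s])
    fix a b :: nat assume ab: "a \<in> I3" "b \<in> I3" "a \<noteq> b"
    show "act (Transposition.transpose a b) (Ab d j c :: _ \<Rightarrow> 'k) = - Ab d j c"
    proof (rule transp_cases[OF ab])
      show "act (Transposition.transpose 0 1) (Ab d j c :: _ \<Rightarrow> 'k) = - Ab d j c"
      proof (rule ext)
        fix a :: "nat \<Rightarrow> nat"
        show "act (Transposition.transpose 0 1) (Ab d j c :: _ \<Rightarrow> 'k) a = (- Ab d j c) a"
          using sg_sw(1)[of "a 0" "a 1" "a 2"] by (simp add: act_def Ab_def mperm01 ct01 srt_sw)
      qed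
      show "act (Transposition.transpose 1 2) (Ab d j c :: _ \<Rightarrow> 'k) = - Ab d j c"
      proof (rule ext)
        fix a :: "nat \<Rightarrow> nat"
        show "act (Transposition.transpose 1 2) (Ab d j c :: _ \<Rightarrow> 'k) a = (- Ab d j c) a"
          using sg_sw(2)[of "a 0" "a 1" "a 2"] by (simp add: act_def Ab_def mperm12 ct12 srt_sw)
      qed
      show "act (Transposition.transpose 0 2) (Ab d j c :: _ \<Rightarrow> 'k) = - Ab d j c"
      proof (rule ext)
        fix a :: "nat \<Rightarrow> nat"
        show "act (Transposition.transpose 0 2) (Ab d j c :: _ \<Rightarrow> 'k) a = (- Ab d j c) a"
          using sg_sw(3)[of "a 0" "a 1" "a 2"] by (simp add: act_def Ab_def mperm02 ct02 srt_sw)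
      qed
    qed
  qed
  then show ?thesis unfolding Va_def Acomp_def by (auto simp: Ab_def)
qed

lemma Vt_triple:
  assumes "f \<in> Vt TYPE('k::field) d j"
  shows "f (tr x y z) = f (trp (srt x y z))"
proof (rule inv_triple)
  have A: "act (Transposition.transpose 0 1) f = f" "act (Transposition.transpose 1 2) f = f"
    using assms t_perm unfolding Vt_def by auto
  show "f (tr x y z) = f (tr y x z)" for x y z
  proof -
    have "f (tr x y z \<circ> Transposition.transpose 0 1) = f (tr x y z)"
      using fun_cong[OF A(1), of "tr x y z"] by (simp only: act_def)
    then show ?thesis unfolding tr_t01 by simp
  qed
  show "f (tr x y z) = f (tr x z y)" for x y z
  proof -
    have "f (tr x y z \<circ> Transposition.transpose 1 2) = f (tr x y z)"
      using fun_cong[OF A(2), of "tr x y z"] by (simp only: act_def)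
    then show ?thesis unfolding tr_t12 by simp
  qed
qed

lemma Va_triple:
  assumes "f \<in> Va TYPE('k::field_char_0) d j"
  shows "f (tr x y z) = of_int (sg x y z) * f (trp (srt x y z))"
proof (rule alt_triple)
  have A: "act (Transposition.transpose 0 1) f = - f" "act (Transposition.transpose 1 2) f = - f"
    using assms t_perm unfolding Va_def
    by (auto simp: sign_swap_id fscale_def fun_eq_iff)
  show "f (tr y x z) = - f (tr x y z)" for x y z
  proof -
    have "act (Transposition.transpose 0 1) f (tr x y z) = (- f) (tr x y z)" using A(1) by simp
    then have "f (tr x y z \<circ> Transposition.transpose 0 1) = - f (tr x y z)"
      unfolding act_def uminus_apply .
    then show ?thesis unfolding tr_t01 by simp
  qed
  show "f (tr x z y) = - f (tr x y z)" for x y z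
  proof -
    have "act (Transposition.transpose 1 2) f (tr x y z) = (- f) (tr x y z)" using A(2) by simp
    then have "f (tr x y z \<circ> Transposition.transpose 1 2) = - f (tr x y z)"
      unfolding act_def uminus_apply .
    then show ?thesis unfolding tr_t12 by simp
  qed
qed

lemma tr_Suc0[simp]: "tr x y z (Suc 0) = y" by (simp add: tr_def)

lemma indep_eval:
  fixes B :: "'i \<Rightarrow> (nat \<Rightarrow> nat) \<Rightarrow> 'k::field"
  assumes ev: "\<And>c c'. c \<in> S \<Longrightarrow> c' \<in> S \<Longrightarrow> B c' (p c) = (if c' = c then 1 else 0)"
  shows "inj_on B S" "F.independent (B ` S)"
proof -
  show inj: "inj_on B S"
  proof (rule inj_onI)
    fix c c' assume "c \<in> S" "c' \<in> S" "B c = B c'"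
    then have "B c' (p c) = 1" using ev[of c c] by simp
    then show "c = c'" using ev[of c c'] \<open>c \<in> S\<close> \<open>c' \<in> S\<close> by (auto split: if_splits)
  qed
  show "F.independent (B ` S)"
    unfolding F.independent_explicit_finite_subsets
  proof (intro allI impI ballI)
    fix T u v
    assume T: "T \<subseteq> B ` S" "finite T" and sum0: "(\<Sum>v\<in>T. fscale (u v) v) = 0" and v: "v \<in> T"
    obtain c where c: "c \<in> S" "v = B c" using T v by auto
    have ev2: "v' (p c) = (if v' = v then 1 else 0)" if "v' \<in> T" for v'
    proof -
      from T(1) that obtain c' where "c' \<in> S" "v' = B c'" by blast
      then show ?thesis using ev[of c c'] c inj by (auto simp: inj_on_eq_iff)
    qed
    have "0 = (\<Sum>v\<in>T. fscale (u v) v) (p c)" using sum0 by simp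
    also have "\<dots> = (\<Sum>v'\<in>T. u v' * v' (p c))" by (simp add: sum_fun_apply)
    also have "\<dots> = (\<Sum>v'\<in>T. if v' = v then u v' else 0)" 
    proof (intro sum.cong refl)
      fix v' assume "v' \<in> T"
      then show "u v' * v' (p c) = (if v' = v then u v' else 0)" using ev2[of v'] by simp
    qed
    also have "\<dots> = u v" using T(2) v by simp
    finally show "u v = 0" by (rule sym)
  qed
qed

lemma Ob_ev:
  assumes "j < d" "c \<in> ST j" "c' \<in> ST j"
  shows "Ob d j c' (trp c) = (if c' = c then 1 else 0)"
proof -
  obtain x y z where c: "c = (x, y, z)" "z \<le> y" "y \<le> x" "x + y + z = j" using assms(2) by (auto simp: ST_def)
  have "trp c \<in> mons d j" using c assms(1) by (simp add: trp_def tr_mons)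
  moreover have "srt (trp c 0) (trp c 1) (trp c 2) = c" using c by (simp add: trp_def srt_id)
  ultimately show ?thesis by (auto simp: Ob_def)
qed

lemma Ab_ev:
  assumes "j < d" "c \<in> SA j" "c' \<in> SA j"
  shows "Ab d j c' (trp c) = (if c' = c then 1 else 0)"
proof -
  obtain x y z where c: "c = (x, y, z)" "z < y" "y < x" "x + y + z = j" using assms(2) by (auto simp: SA_def)
  have "trp c \<in> mons d j" using c assms(1) by (simp add: trp_def tr_mons)
  moreover have "srt (trp c 0) (trp c 1) (trp c 2) = c" using c by (simp add: trp_def srt_id)
  moreover have "sg (trp c 0) (trp c 1) (trp c 2) = 1" using c by (simp add: trp_def sg_one)
  ultimately show ?thesis by (auto simp: Ab_def)
qed

lemma Vt_span:
  assumes f: "f \<in> Vt TYPE('k::field) d j"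
  shows "f = (\<Sum>c\<in>ST j. fscale (f (trp c)) (Ob d j c))"
proof (rule ext)
  fix a
  show "f a = (\<Sum>c\<in>ST j. fscale (f (trp c)) (Ob d j c)) a"
  proof (cases "a \<in> mons d j")
    case False
    then show ?thesis using f by (simp add: sum_fun_apply Ob_def Vt_def Acomp_def)
  next
    case True
    define x where "x = a 0"
    define y where "y = a 1"
    define z where "z = a 2"
    have a: "a = tr x y z" using mons_tr[OF True] x_def y_def z_def by simp
    have k: "srt x y z \<in> ST j" using srt_ST[of x y z] True a
      by (simp add: tr_mons)
    have "(\<Sum>c\<in>ST j. fscale (f (trp c)) (Ob d j c)) a
        = (\<Sum>c\<in>ST j. f (trp c) * (if c = srt x y z then 1 else 0))"
      using True unfolding sum_fun_apply fscale_apply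
      by (intro sum.cong refl) (auto simp: Ob_def a)
    also have "\<dots> = (\<Sum>c\<in>ST j. if c = srt x y z then f (trp c) else 0)"
      by (intro sum.cong refl) auto
    also have "\<dots> = f (trp (srt x y z))" using k finite_ST by simp
    also have "\<dots> = f a" using Vt_triple[OF f] a by simp
    finally show ?thesis by simp
  qed
qed

lemma Va_span:
  assumes f: "f \<in> Va TYPE('k::field_char_0) d j"
  shows "f = (\<Sum>c\<in>SA j. fscale (f (trp c)) (Ab d j c))"
proof (rule ext)
  fix a
  show "f a = (\<Sum>c\<in>SA j. fscale (f (trp c)) (Ab d j c)) a"
  proof (cases "a \<in> mons d j")
    case False
    then show ?thesis using f by (simp add: sum_fun_apply Ab_def Va_def Acomp_def)
  next
    case True
    define x where "x = a 0"
    define y where "y = a 1"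
    define z where "z = a 2"
    have a: "a = tr x y z" using mons_tr[OF True] x_def y_def z_def by simp
    have fa: "f a = of_int (sg x y z) * f (trp (srt x y z))"
      using Va_triple[OF f] a by simp
    have "(\<Sum>c\<in>SA j. fscale (f (trp c)) (Ab d j c)) a
        = (\<Sum>c\<in>SA j. f (trp c) * (if c = srt x y z then of_int (sg x y z) else 0))"
      using True unfolding sum_fun_apply fscale_apply
      by (intro sum.cong refl) (auto simp: Ab_def a)
    also have "\<dots> = (\<Sum>c\<in>SA j. if c = srt x y z then f (trp c) * of_int (sg x y z) else 0)"
      by (intro sum.cong refl) auto
    also have "\<dots> = f a"
    proof (cases "sg x y z = 0")
      case True
      then show ?thesis using fa by (simp cong: if_cong)
    next
      case False
      have k: "srt x y z \<in> SA j" using sg_SA[OF False] \<open>a \<in> mons d j\<close> a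
        by (simp add: tr_mons)
      then show ?thesis using finite_SA fa by simp
    qed
    finally show ?thesis by simp
  qed
qed

lemma dim_Vt:
  assumes "j < d"
  shows "F.dim (Vt TYPE('k::field) d j) = card (ST j)"
proof -
  note ie = indep_eval[where B = "Ob d j :: _ \<Rightarrow> _ \<Rightarrow> 'k" and S = "ST j" and p = trp, OF Ob_ev[OF assms]]
  show ?thesis
  proof (rule F.dim_unique[of "Ob d j ` ST j"])
    show "Ob d j ` ST j \<subseteq> Vt TYPE('k) d j" using Ob_Vt by blast
    show "Vt TYPE('k) d j \<subseteq> F.span (Ob d j ` ST j)"
    proof
      fix f assume f: "f \<in> Vt TYPE('k) d j"
      have "(\<Sum>c\<in>ST j. fscale (f (trp c)) (Ob d j c)) \<in> F.span (Ob d j ` ST j)"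
        by (intro F.span_sum F.span_scale F.span_base) auto
      then show "f \<in> F.span (Ob d j ` ST j)" using Vt_span[OF f] by simp
    qed
    show "F.independent (Ob d j ` ST j :: (_ \<Rightarrow> 'k) set)" using ie(2) .
    show "card (Ob d j ` ST j :: (_ \<Rightarrow> 'k) set) = card (ST j)" using card_image[OF ie(1)] .
  qed
qed

lemma dim_Va:
  assumes "j < d"
  shows "F.dim (Va TYPE('k::field_char_0) d j) = card (SA j)"
proof -
  note ie = indep_eval[where B = "Ab d j :: _ \<Rightarrow> _ \<Rightarrow> 'k" and S = "SA j" and p = trp, OF Ab_ev[OF assms]]
  show ?thesis
  proof (rule F.dim_unique[of "Ab d j ` SA j"])
    show "Ab d j ` SA j \<subseteq> Va TYPE('k) d j" using Ab_Va by blast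
    show "Va TYPE('k) d j \<subseteq> F.span (Ab d j ` SA j)"
    proof
      fix f assume f: "f \<in> Va TYPE('k) d j"
      have "(\<Sum>c\<in>SA j. fscale (f (trp c)) (Ab d j c)) \<in> F.span (Ab d j ` SA j)"
        by (intro F.span_sum F.span_scale F.span_base) auto
      then show "f \<in> F.span (Ab d j ` SA j)" using Va_span[OF f] by simp
    qed
    show "F.independent (Ab d j ` SA j :: (_ \<Rightarrow> 'k) set)" using ie(2) .
    show "card (Ab d j ` SA j :: (_ \<Rightarrow> 'k) set) = card (SA j)" using card_image[OF ie(1)] .
  qed
qed

lemma Acomp_sub: "F.subspace (Acomp TYPE('k::field) d j)"
  unfolding F.subspace_def Acomp_def by auto

lemma Vt_sub: "F.subspace (Vt TYPE('k::field) d j)"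
  using Acomp_sub[of d j] unfolding F.subspace_def Vt_def
  by (auto simp: act_add act_scale act_zero)

lemma Va_sub: "F.subspace (Va TYPE('k::field) d j)"
  using Acomp_sub[of d j] unfolding F.subspace_def Va_def
  by (auto simp: act_add act_scale act_zero fscale_def fun_eq_iff algebra_simps act_def)

lemma triv_eq: "triv TYPE('k::field) d j = F.dim {x \<in> Vt TYPE('k) d j. Eop d x = 0}"
proof -
  have "{f \<in> kerE TYPE('k) d j. \<forall>s. s permutes I3 \<longrightarrow> act s f = f} = {x \<in> Vt TYPE('k) d j. Eop d x = 0}"
    by (auto simp: kerE_def Vt_def zero_fun_def)
  then show ?thesis by (simp add: triv_def)
qed

lemma sgn_eq: "sgn_mult TYPE('k::field) d j = F.dim {x \<in> Va TYPE('k) d j. Eop d x = 0}"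
proof -
  have "{f \<in> kerE TYPE('k) d j. \<forall>s. s permutes I3 \<longrightarrow> act s f = fscale (of_int (sign s)) f} = {x \<in> Va TYPE('k) d j. Eop d x = 0}"
    by (auto simp: kerE_def Va_def zero_fun_def)
  then show ?thesis by (simp add: sgn_mult_def)
qed

lemma triv_card:
  assumes n: "1 \<le> n" "n < d"
  shows "triv TYPE('k::field_char_0) d n + card (ST (n - 1)) = card (ST n)"
proof -
  have sp: "Vt TYPE('k) d n \<subseteq> F.span (Ob d n ` ST n)"
  proof
    fix f assume f: "f \<in> Vt TYPE('k) d n"
    have "(\<Sum>c\<in>ST n. fscale (f (trp c)) (Ob d n c)) \<in> F.span (Ob d n ` ST n)"
      by (intro F.span_sum F.span_scale F.span_base) auto
    then show "f \<in> F.span (Ob d n ` ST n)" using Vt_span[OF f] by simp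
  qed
  have "F.dim (Vt TYPE('k) d n) = F.dim {x \<in> Vt TYPE('k) d n. Eop d x = 0} + F.dim (Eop d ` Vt TYPE('k) d n)"
    by (rule vector_space.rank_nullity_sub[OF F.vector_space_axioms Eop_linear Vt_sub _ sp]) (simp add: finite_ST)
  moreover have "F.dim (Vt TYPE('k) d n) = card (ST n)" using dim_Vt[of n d] n by simp
  moreover have "F.dim (Vt TYPE('k) d (n - 1)) = card (ST (n - 1))" using dim_Vt[of "n - 1" d, where 'k='k] n by simp
  moreover have "Eop d ` Vt TYPE('k) d n = Vt TYPE('k) d (n - 1)" using Eop_image_Vt[OF n] .
  ultimately show ?thesis using triv_eq[of d n, where 'k='k] by simp
qed

lemma sgn_card:
  assumes n: "1 \<le> n" "n < d"
  shows "sgn_mult TYPE('k::field_char_0) d n + card (SA (n - 1)) = card (SA n)"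
proof -
  have sp: "Va TYPE('k) d n \<subseteq> F.span (Ab d n ` SA n)"
  proof
    fix f assume f: "f \<in> Va TYPE('k) d n"
    have "(\<Sum>c\<in>SA n. fscale (f (trp c)) (Ab d n c)) \<in> F.span (Ab d n ` SA n)"
      by (intro F.span_sum F.span_scale F.span_base) auto
    then show "f \<in> F.span (Ab d n ` SA n)" using Va_span[OF f] by simp
  qed
  have "F.dim (Va TYPE('k) d n) = F.dim {x \<in> Va TYPE('k) d n. Eop d x = 0} + F.dim (Eop d ` Va TYPE('k) d n)"
    by (rule vector_space.rank_nullity_sub[OF F.vector_space_axioms Eop_linear Va_sub _ sp]) (simp add: finite_SA)
  moreover have "F.dim (Va TYPE('k) d n) = card (SA n)" using dim_Va[of n d] n by simp
  moreover have "F.dim (Va TYPE('k) d (n - 1)) = card (SA (n - 1))" using dim_Va[of "n - 1" d, where 'k='k] n by simp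
  moreover have "Eop d ` Va TYPE('k) d n = Va TYPE('k) d (n - 1)" using Eop_image_Va[OF n] .
  ultimately show ?thesis using sgn_eq[of d n, where 'k='k] by simp
qed

lemma ST_split:
  assumes "1 \<le> n"
  shows "ST n = (\<lambda>(x,y,z). (Suc x, y, z)) ` ST (n - 1) \<union> (\<lambda>x. (x, x, n - 2 * x)) ` {(n+2) div 3 .. n div 2}"
proof (rule set_eqI)
  fix t :: "nat \<times> nat \<times> nat"
  obtain x y z where t: "t = (x, y, z)" by (cases t) auto
  show "t \<in> ST n \<longleftrightarrow> t \<in> (\<lambda>(x,y,z). (Suc x, y, z)) ` ST (n - 1) \<union> (\<lambda>x. (x, x, n - 2 * x)) ` {(n+2) div 3 .. n div 2}"
  proof
    assume "t \<in> ST n"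
    then have h: "z \<le> y" "y \<le> x" "x + y + z = n" using t by (auto simp: ST_def)
    show "t \<in> (\<lambda>(x,y,z). (Suc x, y, z)) ` ST (n - 1) \<union> (\<lambda>x. (x, x, n - 2 * x)) ` {(n+2) div 3 .. n div 2}"
    proof (cases "x = y")
      case True
      have "x \<in> {(n+2) div 3 .. n div 2}" using h True by auto
      moreover have "t = (x, x, n - 2 * x)" using t h True by auto
      ultimately show ?thesis by blast
    next
      case False
      have "(x - 1, y, z) \<in> ST (n - 1)" using h False by (auto simp: ST_def)
      moreover have "t = (Suc (x - 1), y, z)" using t h False by auto
      ultimately show ?thesis by force
    qed
  next
    assume "t \<in> (\<lambda>(x,y,z). (Suc x, y, z)) ` ST (n - 1) \<union> (\<lambda>x. (x, x, n - 2 * x)) ` {(n+2) div 3 .. n div 2}"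
    then show "t \<in> ST n" using assms by (auto simp: ST_def)
  qed
qed

lemma ST_card:
  assumes "1 \<le> n"
  shows "card (ST n) = card (ST (n - 1)) + (Suc (n div 2) - (n + 2) div 3)"
proof -
  have i1: "inj_on (\<lambda>(x,y,z). (Suc x, y, z)) (ST (n - 1))" by (auto simp: inj_on_def)
  have i2: "inj_on (\<lambda>x. (x, x, n - 2 * x)) {(n+2) div 3 .. n div 2}" by (auto simp: inj_on_def)
  have dj: "(\<lambda>(x,y,z). (Suc x, y, z)) ` ST (n - 1) \<inter> (\<lambda>x. (x, x, n - 2 * x)) ` {(n+2) div 3 .. n div 2} = {}"
    by (auto simp: ST_def)
  have "card (ST n) = card ((\<lambda>(x,y,z). (Suc x, y, z)) ` ST (n - 1)) + card ((\<lambda>x. (x, x, n - 2 * x)) ` {(n+2) div 3 .. n div 2})"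
    unfolding ST_split[OF assms] by (rule card_Un_disjoint[OF finite_imageI finite_imageI dj]) (simp_all add: finite_ST)
  also have "\<dots> = card (ST (n - 1)) + card {(n+2) div 3 .. n div 2}"
    by (simp only: card_image[OF i1] card_image[OF i2])
  finally show ?thesis by simp
qed

lemma SA_split:
  assumes "1 \<le> n"
  shows "SA n = (\<lambda>(x,y,z). (Suc x, y, z)) ` SA (n - 1) \<union> (\<lambda>y. (Suc y, y, n - 2 * y - 1)) ` {(n+2) div 3 ..< (n+1) div 2}"
proof (rule set_eqI)
  fix t :: "nat \<times> nat \<times> nat"
  obtain x y z where t: "t = (x, y, z)" by (cases t) auto
  show "t \<in> SA n \<longleftrightarrow> t \<in> (\<lambda>(x,y,z). (Suc x, y, z)) ` SA (n - 1) \<union> (\<lambda>y. (Suc y, y, n - 2 * y - 1)) ` {(n+2) div 3 ..< (n+1) div 2}"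
  proof
    assume "t \<in> SA n"
    then have h: "z < y" "y < x" "x + y + z = n" using t by (auto simp: SA_def)
    show "t \<in> (\<lambda>(x,y,z). (Suc x, y, z)) ` SA (n - 1) \<union> (\<lambda>y. (Suc y, y, n - 2 * y - 1)) ` {(n+2) div 3 ..< (n+1) div 2}"
    proof (cases "x = Suc y")
      case True
      have "y \<in> {(n+2) div 3 ..< (n+1) div 2}" using h True by auto
      moreover have "t = (Suc y, y, n - 2 * y - 1)" using t h True by auto
      ultimately show ?thesis by blast
    next
      case False
      have "(x - 1, y, z) \<in> SA (n - 1)" using h False by (auto simp: SA_def)
      moreover have "t = (Suc (x - 1), y, z)" using t h False by auto
      ultimately show ?thesis by force
    qed
  next
    assume "t \<in> (\<lambda>(x,y,z). (Suc x, y, z)) ` SA (n - 1) \<union> (\<lambda>y. (Suc y, y, n - 2 * y - 1)) ` {(n+2) div 3 ..< (n+1) div 2}"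
    then show "t \<in> SA n" using assms by (auto simp: SA_def)
  qed
qed

lemma SA_card:
  assumes "1 \<le> n"
  shows "card (SA n) = card (SA (n - 1)) + ((n + 1) div 2 - (n + 2) div 3)"
proof -
  have i1: "inj_on (\<lambda>(x,y,z). (Suc x, y, z)) (SA (n - 1))" by (auto simp: inj_on_def)
  have i2: "inj_on (\<lambda>y. (Suc y, y, n - 2 * y - 1)) {(n+2) div 3 ..< (n+1) div 2}" by (auto simp: inj_on_def)
  have dj: "(\<lambda>(x,y,z). (Suc x, y, z)) ` SA (n - 1) \<inter> (\<lambda>y. (Suc y, y, n - 2 * y - 1)) ` {(n+2) div 3 ..< (n+1) div 2} = {}"
    by (auto simp: SA_def)
  have "card (SA n) = card ((\<lambda>(x,y,z). (Suc x, y, z)) ` SA (n - 1)) + card ((\<lambda>y. (Suc y, y, n - 2 * y - 1)) ` {(n+2) div 3 ..< (n+1) div 2})"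
    unfolding SA_split[OF assms] by (rule card_Un_disjoint[OF finite_imageI finite_imageI dj]) (simp_all add: finite_SA)
  also have "\<dots> = card (SA (n - 1)) + card {(n+2) div 3 ..< (n+1) div 2}"
    by (simp only: card_image[OF i1] card_image[OF i2])
  finally show ?thesis by simp
qed


lemma dv: "(n::nat) * q \<le> m \<Longrightarrow> m < n * q + n \<Longrightarrow> m div n = q"
  by (rule div_nat_eqI) simp_all

lemma six_cases:
  fixes d :: nat
  obtains k where "d = 6 * k" | k where "d = 6 * k + 1" | k where "d = 6 * k + 2"
   | k where "d = 6 * k + 3" | k where "d = 6 * k + 4" | k where "d = 6 * k + 5"
proof -
  have "d = 6 * (d div 6) + d mod 6" by simp
  moreover have "d mod 6 < 6" by simp
  ultimately show ?thesis using that by (metis less_Suc_eq numeral_eq_Suc pred_numeral_simps add_0_right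
     semiring_norm(26) semiring_norm(27) semiring_norm(28) less_Suc0 One_nat_def)
qed

lemma arith_odd:
  assumes "odd (d::nat)" "3 \<le> d"
  shows "Suc ((d - 1) div 2) - (d + 1) div 3 = (d - 1) div 6 + 1 \<and> d div 2 - (d + 1) div 3 = (d - 1) div 6"
proof -
  from assms(1) consider k where "d = 6 * k + 1" | k where "d = 6 * k + 3" | k where "d = 6 * k + 5"
    by (cases d rule: six_cases) auto
  then show ?thesis
  proof cases
    case 1
    have "(d - 1) div 2 = 3 * k" "(d + 1) div 3 = 2 * k" "(d - 1) div 6 = k" "d div 2 = 3 * k"
      by (rule dv; simp add: 1)+
    then show ?thesis by simp
  next
    case 2
    have "(d - 1) div 2 = 3 * k + 1" "(d + 1) div 3 = 2 * k + 1" "(d - 1) div 6 = k" "d div 2 = 3 * k + 1"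
      by (rule dv; simp add: 2)+
    then show ?thesis by simp
  next
    case 3
    have "(d - 1) div 2 = 3 * k + 2" "(d + 1) div 3 = 2 * k + 2" "(d - 1) div 6 = k" "d div 2 = 3 * k + 2"
      by (rule dv; simp add: 3)+
    then show ?thesis by simp
  qed
qed

lemma arith_even:
  assumes "even (d::nat)" "4 \<le> d"
  shows "Suc ((d - 1) div 2) - (d + 1) div 3 = (d + 2) div 6 \<and> d div 2 - (d + 1) div 3 = (d + 2) div 6"
proof -
  from assms(1) consider k where "d = 6 * k" | k where "d = 6 * k + 2" | k where "d = 6 * k + 4"
    by (cases d rule: six_cases) auto
  then show ?thesis
  proof cases
    case 1
    then have k: "k \<ge> 1" using assms(2) by simp
    have "(d - 1) div 2 = 3 * k - 1" "(d + 1) div 3 = 2 * k" "(d + 2) div 6 = k" "d div 2 = 3 * k"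
      by (rule dv; use k in \<open>simp add: 1\<close>)+
    then show ?thesis using k by simp
  next
    case 2
    have "(d - 1) div 2 = 3 * k" "(d + 1) div 3 = 2 * k + 1" "(d + 2) div 6 = k" "d div 2 = 3 * k + 1"
      by (rule dv; simp add: 2)+
    then show ?thesis by simp
  next
    case 3
    have "(d - 1) div 2 = 3 * k + 1" "(d + 1) div 3 = 2 * k + 1" "(d + 2) div 6 = k + 1" "d div 2 = 3 * k + 2"
      by (rule dv; simp add: 3)+
    then show ?thesis by simp
  qed
qed

theorem lemma5p1:
  fixes d :: nat
  assumes "alg_closed TYPE('k::field_char_0)"
  shows "(odd d \<and> d \<ge> 3 \<longrightarrow>
            triv TYPE('k) d (d - 1) = (d - 1) div 6 + 1 \<and>
            sgn_mult TYPE('k) d (d - 1) = (d - 1) div 6)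
       \<and> (even d \<and> d \<ge> 4 \<longrightarrow>
            triv TYPE('k) d (d - 1) = (d + 2) div 6 \<and>
            sgn_mult TYPE('k) d (d - 1) = (d + 2) div 6)"
proof -
  have gen: "triv TYPE('k) d (d - 1) = Suc ((d - 1) div 2) - (d + 1) div 3 \<and>
             sgn_mult TYPE('k) d (d - 1) = d div 2 - (d + 1) div 3" if d3: "d \<ge> 3"
  proof -
    have n: "1 \<le> d - 1" "d - 1 < d" using d3 by auto
    have t: "triv TYPE('k) d (d - 1) + card (ST (d - 1 - 1)) = card (ST (d - 1))"
      by (rule triv_card[OF n])
    have s: "sgn_mult TYPE('k) d (d - 1) + card (SA (d - 1 - 1)) = card (SA (d - 1))"
      by (rule sgn_card[OF n])
    have ct: "card (ST (d - 1)) = card (ST (d - 1 - 1)) + (Suc ((d - 1) div 2) - (d - 1 + 2) div 3)"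
      by (rule ST_card[OF n(1)])
    have cs: "card (SA (d - 1)) = card (SA (d - 1 - 1)) + ((d - 1 + 1) div 2 - (d - 1 + 2) div 3)"
      by (rule SA_card[OF n(1)])
    have e1: "d - 1 + 2 = d + 1" "d - 1 + 1 = d" using d3 by auto
    show ?thesis using t s ct cs unfolding e1 by simp
  qed
  show ?thesis
  proof (intro conjI impI)
    assume h: "odd d \<and> d \<ge> 3"
    then have g: "triv TYPE('k) d (d - 1) = Suc ((d - 1) div 2) - (d + 1) div 3 \<and>
             sgn_mult TYPE('k) d (d - 1) = d div 2 - (d + 1) div 3" using gen by blast
    have "Suc ((d - 1) div 2) - (d + 1) div 3 = (d - 1) div 6 + 1"
      "d div 2 - (d + 1) div 3 = (d - 1) div 6" using arith_odd h by blast+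
    then show "triv TYPE('k) d (d - 1) = (d - 1) div 6 + 1"
      "sgn_mult TYPE('k) d (d - 1) = (d - 1) div 6" using g by auto
  next
    assume h: "even d \<and> d \<ge> 4"
    then have g: "triv TYPE('k) d (d - 1) = Suc ((d - 1) div 2) - (d + 1) div 3 \<and>
             sgn_mult TYPE('k) d (d - 1) = d div 2 - (d + 1) div 3" using gen by auto
    have "Suc ((d - 1) div 2) - (d + 1) div 3 = (d + 2) div 6"
      "d div 2 - (d + 1) div 3 = (d + 2) div 6" using arith_even h by blast+
    then show "triv TYPE('k) d (d - 1) = (d + 2) div 6"
      "sgn_mult TYPE('k) d (d - 1) = (d + 2) div 6" using g by auto
  qed
qed

end
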